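(* There is a universal constant $c>0$ such that for every $m\ge2$, every $T\ge K\ge4$ (with $m\le K$), and every multi-dueling bandit algorithm, there exists an oblivious sequence of preference matrices $P_1,\dots,P_T$ on $[K]$ with a common Condorcet winner $a^\star$ (i.e. $P_t(a^\star,i)\ge1/2$ for all $i,t$) such that $\mathbb{E}[R_T^{\mathrm C}]\ge c\sqrt{KT}$.
   Context: A preference matrix on $[K]$ is $P\in[0,1]^{K\times K}$ with $P(i,j)+P(j,i)=1$, $P(i,i)=1/2$. Multi-dueling bandit protocol: at each round $t\in[T]$ the learner, based on past observations and internal randomness, selects a multiset $\mathcal{A}_t\subseteq[K]$ of size $m$ (elements listed $\mathcal{A}_t(1),\dots,\mathcal{A}_t(m)$) and observes only a winning index $I_t\in[m]$ drawn with probability $\Pr[I_t=i]=\sum_{j\ne i}\frac{2P_t(\mathcal{A}_t(i),\mathcal{A}_t(j))}{m(m-1)}$. Oblivious means the sequence $P_1,\dots,P_T$ is fixed in advance. Condorcet regret: $R_T^{\mathrm C}=\sum_{t=1}^T\frac1m\sum_{j=1}^m\Delta_t(\mathcal{A}_t(j))$ with $\Delta_t(i)=P_t(a^\star,i)-\tfrac12$. *)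

theory Defs
  imports "HOL-Probability.Probability_Mass_Function"
begin

text \<open>Arms are the natural numbers 0,...,K-1 (standing for [K]).
A preference matrix is a function nat => nat => real, constrained on [K].\<close>

definition pref_matrix :: "nat \<Rightarrow> (nat \<Rightarrow> nat \<Rightarrow> real) \<Rightarrow> bool" where
  "pref_matrix K P \<longleftrightarrow>
     (\<forall>i<K. \<forall>j<K. 0 \<le> P i j \<and> P i j \<le> 1 \<and> P i j + P j i = 1) \<and> (\<forall>i<K. P i i = 1/2)"

text \<open>An action is a listing A(1),...,A(m) of a multiset of m arms (list indices 0..m-1).
A history is the list of past (action, observed winning index) pairs.\<close>

type_synonym action = "nat list"
type_synonym history = "(action \<times> nat) list"

definition valid_alg :: "nat \<Rightarrow> nat \<Rightarrow> (history \<Rightarrow> action pmf) \<Rightarrow> bool" where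
  "valid_alg K m alg \<longleftrightarrow>
     (\<forall>h. \<forall>A\<in>set_pmf (alg h). length A = m \<and> set A \<subseteq> {..<K})"

text \<open>Probability that the winning index is i (0-based) when playing A under P.\<close>

definition win_prob :: "nat \<Rightarrow> (nat \<Rightarrow> nat \<Rightarrow> real) \<Rightarrow> action \<Rightarrow> nat \<Rightarrow> real" where
  "win_prob m P A i =
     (\<Sum>j\<in>{..<m} - {i}. 2 * P (A ! i) (A ! j) / (real m * (real m - 1)))"

definition inst_regret :: "nat \<Rightarrow> (nat \<Rightarrow> nat \<Rightarrow> real) \<Rightarrow> nat \<Rightarrow> action \<Rightarrow> real" where
  "inst_regret m P a A = (1 / real m) * (\<Sum>j<m. P a (A ! j) - 1/2)"

fun exp_regret_from ::
  "nat \<Rightarrow> (history \<Rightarrow> action pmf) \<Rightarrow> (nat \<Rightarrow> nat \<Rightarrow> nat \<Rightarrow> real) \<Rightarrow> nat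
     \<Rightarrow> nat \<Rightarrow> nat \<Rightarrow> history \<Rightarrow> real" where
  "exp_regret_from m alg Ps a t 0 h = 0"
| "exp_regret_from m alg Ps a t (Suc n) h =
     measure_pmf.expectation (alg h)
       (\<lambda>A. inst_regret m (Ps t) a A
            + (\<Sum>i<m. win_prob m (Ps t) A i * exp_regret_from m alg Ps a (Suc t) n (h @ [(A, i)])))"

definition expected_regret ::
  "nat \<Rightarrow> nat \<Rightarrow> (history \<Rightarrow> action pmf) \<Rightarrow> (nat \<Rightarrow> nat \<Rightarrow> nat \<Rightarrow> real) \<Rightarrow> nat \<Rightarrow> real" where
  "expected_regret m T alg Ps a = exp_regret_from m alg Ps a 1 T []"

end

theory Submission
  imports Defs
begin

locale setting =
  fixes K m :: nat and alg :: "history \<Rightarrow> action pmf"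
  assumes valid: "valid_alg K m alg" and m2: "2 \<le> m"
begin

definition Acts :: "action set" where "Acts = {A. set A \<subseteq> {..<K} \<and> length A = m}"

lemma fin_Acts: "finite Acts"
  unfolding Acts_def by (rule finite_lists_length_eq) simp

lemma supp: "set_pmf (alg h) \<subseteq> Acts"
  using valid unfolding valid_alg_def Acts_def by auto

lemma sum1: "(\<Sum>A\<in>Acts. pmf (alg h) A) = 1"
  by (rule sum_pmf_eq_1[OF fin_Acts supp])

lemma expect_eq: "measure_pmf.expectation (alg h) f = (\<Sum>A\<in>Acts. pmf (alg h) A * f A)"
  using integral_measure_pmf_real[OF fin_Acts, of "alg h" f] supp
  by (auto simp: mult.commute)

fun Ev :: "(history \<Rightarrow> action \<Rightarrow> nat \<Rightarrow> real) \<Rightarrow> (history \<Rightarrow> real) \<Rightarrow> nat \<Rightarrow> history \<Rightarrow> real" where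
  "Ev q g 0 h = g h"
| "Ev q g (Suc n) h = (\<Sum>A\<in>Acts. pmf (alg h) A * (\<Sum>i<m. q h A i * Ev q g n (h @ [(A,i)])))"

definition nonneg :: "(history \<Rightarrow> action \<Rightarrow> nat \<Rightarrow> real) \<Rightarrow> bool" where
  "nonneg q \<longleftrightarrow> (\<forall>h. \<forall>A\<in>Acts. \<forall>i<m. 0 \<le> q h A i)"

definition stoch :: "(history \<Rightarrow> action \<Rightarrow> nat \<Rightarrow> real) \<Rightarrow> bool" where
  "stoch q \<longleftrightarrow> nonneg q \<and> (\<forall>h. \<forall>A\<in>Acts. (\<Sum>i<m. q h A i) = 1)"

lemma Ev_mono_P:
  assumes q: "nonneg q" and P: "P h"
    and pres: "\<And>h' A i. P h' \<Longrightarrow> A \<in> Acts \<Longrightarrow> i < m \<Longrightarrow> P (h' @ [(A,i)])"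
    and le: "\<And>h'. P h' \<Longrightarrow> g h' \<le> g2 h'"
  shows "Ev q g n h \<le> Ev q g2 n h"
  using P
proof (induction n arbitrary: h)
  case 0 then show ?case using le by simp
next
  case (Suc n)
  show ?case unfolding Ev.simps
  proof (rule sum_mono, rule mult_left_mono)
    fix A assume A: "A \<in> Acts"
    show "(\<Sum>i<m. q h A i * Ev q g n (h @ [(A, i)])) \<le> (\<Sum>i<m. q h A i * Ev q g2 n (h @ [(A, i)]))"
    proof (rule sum_mono, rule mult_left_mono)
      fix i assume "i \<in> {..<m}"
      then show "Ev q g n (h @ [(A, i)]) \<le> Ev q g2 n (h @ [(A, i)])"
        using Suc pres A by auto
      show "0 \<le> q h A i" using q A \<open>i \<in> {..<m}\<close> unfolding nonneg_def by auto
    qed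
  qed simp
qed

lemma Ev_mono:
  assumes "nonneg q" "\<And>h'. g h' \<le> g2 h'"
  shows "Ev q g n h \<le> Ev q g2 n h"
  using Ev_mono_P[where P="\<lambda>_. True"] assms by blast

lemma Ev_lin: "Ev q (\<lambda>h. c * g h + d * g2 h) n h = c * Ev q g n h + d * Ev q g2 n h"
proof (induction n arbitrary: h)
  case 0 then show ?case by simp
next
  case (Suc n)
  then show ?case
    by (simp add: algebra_simps sum.distrib sum_distrib_left)
qed

lemma Ev_sum: "finite F \<Longrightarrow> Ev q (\<lambda>h. \<Sum>a\<in>F. g a h) n h = (\<Sum>a\<in>F. Ev q (g a) n h)"
proof (induction n arbitrary: h)
  case 0 then show ?case by simp
next
  case (Suc n)
  then show ?case
    by (simp add: algebra_simps sum_distrib_left sum.swap[of _ F] )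
qed

lemma Ev_const_add:
  assumes "stoch q"
  shows "Ev q (\<lambda>h. g h + c) n h = Ev q g n h + c"
proof (induction n arbitrary: h)
  case 0 then show ?case by simp
next
  case (Suc n)
  have "(\<Sum>i<m. q h A i * Ev q (\<lambda>h. g h + c) n (h @ [(A, i)])) =
        (\<Sum>i<m. q h A i * Ev q g n (h @ [(A, i)])) + c" if "A \<in> Acts" for A
  proof -
    have "(\<Sum>i<m. q h A i * Ev q (\<lambda>h. g h + c) n (h @ [(A, i)])) =
          (\<Sum>i<m. q h A i * Ev q g n (h @ [(A, i)]) + c * q h A i)"
      unfolding Suc.IH by (simp add: algebra_simps)
    also have "\<dots> = (\<Sum>i<m. q h A i * Ev q g n (h @ [(A, i)])) + c * (\<Sum>i<m. q h A i)"
      by (simp add: sum.distrib sum_distrib_left)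
    finally show ?thesis using assms that unfolding stoch_def by simp
  qed
  then have "Ev q (\<lambda>h. g h + c) (Suc n) h =
     (\<Sum>A\<in>Acts. pmf (alg h) A * (\<Sum>i<m. q h A i * Ev q g n (h @ [(A, i)])) + pmf (alg h) A * c)"
    unfolding Ev.simps by (intro sum.cong) (auto simp: algebra_simps)
  also have "\<dots> = Ev q g (Suc n) h + (\<Sum>A\<in>Acts. pmf (alg h) A) * c"
    by (simp add: sum.distrib sum_distrib_right)
  finally show ?case by (simp add: sum1)
qed

lemma Ev_const:
  assumes "stoch q"
  shows "Ev q (\<lambda>h. c) n h = c"
  using Ev_const_add[OF assms, of "\<lambda>_. 0" c n h] Ev_lin[of q 0 "\<lambda>_. 0" 0 "\<lambda>_. 0" n h] by simp

lemma Ev_len: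
  assumes "stoch q"
  shows "Ev q (\<lambda>h. real (length h)) n h = real (length h) + n"
proof (induction n arbitrary: h)
  case 0 then show ?case by simp
next
  case (Suc n)
  have "(\<Sum>i<m. q h A i * Ev q (\<lambda>h. real (length h)) n (h @ [(A, i)])) = real (length h) + Suc n"
    if "A \<in> Acts" for A
  proof -
    have "(\<Sum>i<m. q h A i * Ev q (\<lambda>h. real (length h)) n (h @ [(A, i)])) =
          (\<Sum>i<m. q h A i) * (real (length h) + Suc n)"
      unfolding Suc.IH sum_distrib_right by (intro sum.cong) (auto simp: algebra_simps)
    then show ?thesis using assms that unfolding stoch_def by simp
  qed
  then show ?case by (simp add: sum1 flip: sum_distrib_right)
qed

lemma Ev_cong_len:
  assumes "\<And>h'. length h' = length h + n \<Longrightarrow> g h' = g2 h'"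
  shows "Ev q g n h = Ev q g2 n h"
  using assms
proof (induction n arbitrary: h)
  case 0 then show ?case by simp
next
  case (Suc n)
  have "Ev q g n (h @ [(A,i)]) = Ev q g2 n (h @ [(A,i)])" for A i
    by (rule Suc.IH) (use Suc.prems in auto)
  then show ?case by simp
qed

lemma Ev_nonneg:
  assumes "nonneg q" "\<And>h. 0 \<le> g h"
  shows "0 \<le> Ev q g n h"
  using Ev_mono[OF assms(1), of "\<lambda>_. 0" g n h] Ev_lin[of q 0 "\<lambda>_. 0" 0 "\<lambda>_. 0" n h] assms(2) by simp

fun Mv :: "(history \<Rightarrow> action \<Rightarrow> nat \<Rightarrow> real) \<Rightarrow> nat \<Rightarrow> history \<Rightarrow> real" where
  "Mv q 0 h = 1"
| "Mv q (Suc n) h = (\<Sum>A\<in>Acts. pmf (alg h) A * (\<Sum>i<m. (real m * (q h A i)^2) * Mv q n (h @ [(A,i)])))"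

lemma Mv_nonneg: "0 \<le> Mv q n h"
  by (induction n arbitrary: h) (auto intro!: sum_nonneg mult_nonneg_nonneg)

definition q0 :: "history \<Rightarrow> action \<Rightarrow> nat \<Rightarrow> real" where "q0 h A i = 1 / real m"

lemma stoch_q0: "stoch q0"
  using m2 unfolding stoch_def nonneg_def q0_def by auto

lemma nonneg_q0: "nonneg q0"
  using stoch_q0 unfolding stoch_def by simp

lemma amgm_step:
  fixes q Y W M t :: real
  assumes q: "0 \<le> q" and t: "0 < t" and W: "0 \<le> W" and M: "0 \<le> M" and mpos: "0 < mm"
    and Y: "\<And>s. 0 < s \<Longrightarrow> Y \<le> (s * W + M / s) / 2"
  shows "q * Y \<le> (t * (1 / mm * W) + mm * q^2 * M / t) / 2"
proof (cases "q = 0")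
  case True then show ?thesis using t W mpos by simp
next
  case False
  then have qp: "0 < q" using q by simp
  define s where "s = t / (mm * q)"
  have sp: "0 < s" using t mpos qp by (simp add: s_def)
  have "q * Y \<le> q * ((s * W + M / s) / 2)" using Y[OF sp] qp by (simp add: mult_left_mono)
  also have "\<dots> = (t * (1 / mm * W) + mm * q^2 * M / t) / 2"
    using qp mpos t by (simp add: s_def field_simps power2_eq_square)
  finally show ?thesis .
qed

lemma amgm:
  assumes q: "nonneg q" and f: "\<And>h. 0 \<le> f h" and t: "0 < t"
  shows "Ev q f n h \<le> (t * Ev q0 (\<lambda>h. (f h)^2) n h + Mv q n h / t) / 2"
  using t
proof (induction n arbitrary: h t)
  case 0
  have "0 \<le> (t * f h - 1)^2 / t" using 0 by simp
  then have "0 \<le> (t * (f h)^2 + 1 / t) / 2 - f h"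
    using 0 by (simp add: field_simps power2_eq_square)
  then show ?case by simp
next
  case (Suc n)
  have mpos: "0 < real m" using m2 by simp
  have step: "q h A i * Ev q f n (h @ [(A,i)]) \<le>
     (t * (1 / real m * Ev q0 (\<lambda>h. (f h)^2) n (h @ [(A,i)])) + real m * (q h A i)^2 * Mv q n (h @ [(A,i)]) / t) / 2"
    if "A \<in> Acts" "i < m" for A i
    by (rule amgm_step) (use q that Suc mpos in \<open>auto simp: nonneg_def intro!: Ev_nonneg[OF nonneg_q0] Mv_nonneg\<close>)
  have "Ev q f (Suc n) h \<le> (\<Sum>A\<in>Acts. pmf (alg h) A * (\<Sum>i<m.
     (t * (1 / real m * Ev q0 (\<lambda>h. (f h)^2) n (h @ [(A,i)])) + real m * (q h A i)^2 * Mv q n (h @ [(A,i)]) / t) / 2))"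
    unfolding Ev.simps
    by (intro sum_mono mult_left_mono) (use step in auto)
  also have "\<dots> = (t * Ev q0 (\<lambda>h. (f h)^2) (Suc n) h + Mv q (Suc n) h / t) / 2"
    by (simp add: q0_def sum_distrib_left sum_divide_distrib algebra_simps add_divide_distrib sum.distrib)
  finally show ?case .
qed

lemma compare:
  assumes qa: "stoch qa" and qb: "stoch qb"
    and Stm: "\<And>h x. St h \<Longrightarrow> St (h @ [x])"
    and agree: "\<And>h A i. \<not> St h \<Longrightarrow> qb h A i = qa h A i"
    and g: "\<And>h. g h \<le> real (length h)"
  shows "Ev qa g n h \<le> Ev qb (\<lambda>h. if St h then real (length h) else g h) n h"
proof (induction n arbitrary: h)
  case 0 then show ?case using g by simp
next
  case (Suc n)
  show ?case
  proof (cases "St h")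
    case True
    have "Ev qa g (Suc n) h \<le> Ev qa (\<lambda>h. real (length h)) (Suc n) h"
      by (rule Ev_mono) (use qa g in \<open>auto simp: stoch_def\<close>)
    also have "\<dots> = Ev qb (\<lambda>h. real (length h)) (Suc n) h"
      by (simp only: Ev_len[OF qa] Ev_len[OF qb])
    also have "\<dots> \<le> Ev qb (\<lambda>h. if St h then real (length h) else g h) (Suc n) h"
      by (rule Ev_mono_P[where P=St]) (use qb True Stm in \<open>auto simp: stoch_def\<close>)
    finally show ?thesis .
  next
    case False
    show ?thesis unfolding Ev.simps agree[OF False]
      by (intro sum_mono mult_left_mono) (use Suc qa in \<open>auto simp: stoch_def nonneg_def\<close>)
  qed
qed

definition dl :: "nat \<Rightarrow> nat \<Rightarrow> real" where "dl a x = (if x = a then 1 else 0)"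

definition Pa :: "real \<Rightarrow> nat \<Rightarrow> nat \<Rightarrow> nat \<Rightarrow> real" where
  "Pa \<epsilon> a x y = 1/2 + \<epsilon> * (dl a x - dl a y)"

definition cnt :: "nat \<Rightarrow> action \<Rightarrow> real" where
  "cnt a A = (\<Sum>j<m. dl a (A ! j))"

lemma cnt_nonneg: "0 \<le> cnt a A"
  unfolding cnt_def dl_def by (auto intro: sum_nonneg)

lemma cnt_le: "cnt a A \<le> real m"
proof -
  have "cnt a A \<le> (\<Sum>j<m. 1)" unfolding cnt_def dl_def by (intro sum_mono) auto
  then show ?thesis by simp
qed

lemma wp_formula:
  assumes i: "i < m"
  shows "win_prob m (Pa \<epsilon> a) A i = 1 / real m + 2 * \<epsilon> / (real m * (real m - 1)) * (real m * dl a (A ! i) - cnt a A)"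
proof -
  have m1: "real m - 1 > 0" using m2 by simp
  have s: "(\<Sum>j<m. Pa \<epsilon> a (A ! i) (A ! j)) = real m / 2 + \<epsilon> * (real m * dl a (A ! i) - cnt a A)"
    unfolding Pa_def cnt_def by (simp add: sum.distrib sum_subtractf sum_distrib_left algebra_simps)
  have "win_prob m (Pa \<epsilon> a) A i = (\<Sum>j<m. 2 * Pa \<epsilon> a (A ! i) (A ! j) / (real m * (real m - 1)))
        - 2 * Pa \<epsilon> a (A ! i) (A ! i) / (real m * (real m - 1))"
    unfolding win_prob_def using i by (simp add: sum_diff1)
  also have "\<dots> = (2 * (\<Sum>j<m. Pa \<epsilon> a (A ! i) (A ! j)) - 1) / (real m * (real m - 1))"
    by (simp add: Pa_def sum_divide_distrib[symmetric] sum_distrib_left diff_divide_distrib)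
  also have "\<dots> = 1 / real m + 2 * \<epsilon> / (real m * (real m - 1)) * (real m * dl a (A ! i) - cnt a A)"
    unfolding s using m1 m2 by (simp add: field_simps)
  finally show ?thesis .
qed

lemma sum_dl: "(\<Sum>i<m. dl a (A ! i)) = cnt a A" unfolding cnt_def ..

lemma wp_sum: "(\<Sum>i<m. win_prob m (Pa \<epsilon> a) A i) = 1"
proof -
  have "(\<Sum>i<m. win_prob m (Pa \<epsilon> a) A i) =
     (\<Sum>i<m. 1 / real m + 2 * \<epsilon> / (real m * (real m - 1)) * (real m * dl a (A ! i) - cnt a A))"
    by (intro sum.cong) (auto simp: wp_formula)
  also have "\<dots> = (\<Sum>i<m. 1 / real m) + 2 * \<epsilon> / (real m * (real m - 1)) * (\<Sum>i<m. (real m * dl a (A ! i) - cnt a A))"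
    by (simp add: sum.distrib sum_distrib_left)
  also have "(\<Sum>i<m. (real m * dl a (A ! i) - cnt a A)) = 0"
    by (simp add: sum_subtractf sum_dl flip: sum_distrib_left)
  finally show ?thesis using m2 by simp
qed

lemma wp_nonneg:
  assumes i: "i < m" and e: "0 \<le> \<epsilon>" "\<epsilon> \<le> 1/16"
  shows "0 \<le> win_prob m (Pa \<epsilon> a) A i"
proof -
  have m1: "real m - 1 \<ge> 1" using m2 by simp
  have "2 * \<epsilon> / (real m * (real m - 1)) * cnt a A \<le> 2 * (1/16) / (real m * (real m - 1)) * real m"
    using e cnt_le cnt_nonneg m1 by (intro mult_mono divide_right_mono) auto
  also have "\<dots> \<le> 1 / real m" using m1 m2 by (simp add: field_simps)
  finally have "2 * \<epsilon> / (real m * (real m - 1)) * cnt a A \<le> 1 / real m" .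
  moreover have "0 \<le> 2 * \<epsilon> / (real m * (real m - 1)) * (real m * dl a (A ! i))"
    using e m1 by (simp add: dl_def)
  moreover have "2 * \<epsilon> / (real m * (real m - 1)) * (real m * dl a (A ! i) - cnt a A) =
    2 * \<epsilon> / (real m * (real m - 1)) * (real m * dl a (A ! i)) - 2 * \<epsilon> / (real m * (real m - 1)) * cnt a A"
    by (simp add: right_diff_distrib)
  moreover have "0 < 1 / real m" using m2 by simp
  ultimately show ?thesis unfolding wp_formula[OF i] by linarith
qed

lemma chi:
  shows "(\<Sum>i<m. real m * (win_prob m (Pa \<epsilon> a) A i)^2) \<le> 1 + 16 * \<epsilon>^2 * (cnt a A / real m)"
proof -
  define c where "c = 2 * \<epsilon> / (real m * (real m - 1))"
  define d where "d i = real m * dl a (A ! i) - cnt a A" for i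
  have mp: "real m > 0" and m1: "real m - 1 \<ge> 1" using m2 by auto
  have sd: "(\<Sum>i<m. d i) = 0" unfolding d_def by (simp add: sum_subtractf sum_dl flip: sum_distrib_left)
  have dl2: "(dl a x)^2 = dl a x" for x by (simp add: dl_def)
  have sd2: "(\<Sum>i<m. (d i)^2) = (real m)^2 * cnt a A - real m * (cnt a A)^2"
  proof -
    have "(\<Sum>i<m. (d i)^2) = (\<Sum>i<m. (real m)^2 * dl a (A ! i) - 2 * real m * cnt a A * dl a (A ! i) + (cnt a A)^2)"
      unfolding d_def by (intro sum.cong) (auto simp: power2_diff power_mult_distrib dl2)
    also have "\<dots> = (real m)^2 * cnt a A - 2 * real m * cnt a A * cnt a A + real m * (cnt a A)^2"
      by (simp add: sum.distrib sum_subtractf sum_dl flip: sum_distrib_left)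
    finally show ?thesis by (simp add: power2_eq_square)
  qed
  have "(\<Sum>i<m. real m * (win_prob m (Pa \<epsilon> a) A i)^2) = (\<Sum>i<m. 1 / real m + 2 * c * d i + real m * c^2 * (d i)^2)"
  proof (intro sum.cong refl)
    fix i assume "i \<in> {..<m}"
    then have w: "win_prob m (Pa \<epsilon> a) A i = 1 / real m + c * d i"
      using wp_formula[of i] unfolding c_def d_def by simp
    show "real m * (win_prob m (Pa \<epsilon> a) A i)^2 = 1 / real m + 2 * c * d i + real m * c^2 * (d i)^2"
      unfolding w power2_eq_square using mp by (simp add: field_simps)
  qed
  also have "\<dots> = 1 + 2 * c * (\<Sum>i<m. d i) + real m * c^2 * (\<Sum>i<m. (d i)^2)"
    using mp by (simp add: sum.distrib sum_distrib_left)
  also have "\<dots> = 1 + real m * c^2 * ((real m)^2 * cnt a A - real m * (cnt a A)^2)"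
    by (simp add: sd sd2)
  also have "\<dots> \<le> 1 + real m * c^2 * ((real m)^2 * cnt a A)"
    using cnt_nonneg[of a A] mp by (intro add_left_mono mult_left_mono) auto
  also have "real m * c^2 * ((real m)^2 * cnt a A) = (4 * \<epsilon>^2 * real m / (real m - 1)^2) * cnt a A"
  proof -
    have "real m - 1 \<noteq> 0" using m1 by simp
    then show ?thesis unfolding c_def using mp m1
      by (simp add: power_divide power_mult_distrib field_simps) (simp add: power2_eq_square algebra_simps)
  qed
  also have "\<dots> \<le> (16 * \<epsilon>^2 / real m) * cnt a A"
  proof (intro mult_right_mono cnt_nonneg)
    have "0 \<le> (3 * real m - 2) * (real m - 2)" using m2 by (intro mult_nonneg_nonneg) auto
    then have "(real m)^2 \<le> 4 * (real m - 1)^2" by (simp add: power2_eq_square algebra_simps)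
    then have "4 * \<epsilon>^2 * (real m * real m) \<le> 4 * \<epsilon>^2 * (4 * (real m - 1)^2)"
      by (intro mult_left_mono) (auto simp: power2_eq_square)
    then show "4 * \<epsilon>^2 * real m / (real m - 1)^2 \<le> 16 * \<epsilon>^2 / real m"
      using mp m1 by (simp add: field_simps)
  qed
  finally show ?thesis by simp
qed

definition Sa :: "nat \<Rightarrow> history \<Rightarrow> real" where
  "Sa a h = sum_list (map (\<lambda>x. min 1 (cnt a (fst x) / real m)) h)"

lemma Sa_snoc: "Sa a (h @ [(A,i)]) = Sa a h + min 1 (cnt a A / real m)"
  unfolding Sa_def by simp

lemma Sa_Nil: "Sa a [] = 0" unfolding Sa_def by simp

lemma min_nonneg: "0 \<le> min 1 (cnt a A / real m)"
  using cnt_nonneg[of a A] by simp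

lemma Sa_nonneg: "0 \<le> Sa a h"
  unfolding Sa_def by (induction h) (auto intro: add_nonneg_nonneg min_nonneg)

lemma Sa_le_len: "Sa a h \<le> real (length h)"
  unfolding Sa_def by (induction h) auto

lemma Sa_mono: "Sa a h \<le> Sa a (h @ [x])"
  using min_nonneg[of a "fst x"] unfolding Sa_def by simp

lemma min_Acts: "A \<in> Acts \<Longrightarrow> min 1 (cnt a A / real m) = cnt a A / real m"
  using cnt_le[of a A] m2 by simp

lemma sum_min_le: "(\<Sum>a<K. min 1 (cnt a A / real m)) \<le> 1"
proof -
  have "(\<Sum>a<K. min 1 (cnt a A / real m)) \<le> (\<Sum>a<K. cnt a A / real m)"
    by (intro sum_mono) auto
  also have "\<dots> = (\<Sum>j<m. \<Sum>a<K. dl a (A ! j)) / real m"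
    unfolding cnt_def by (simp add: sum_divide_distrib[symmetric] sum.swap[of _ "{..<K}"])
  also have "\<dots> \<le> (\<Sum>j<m. 1) / real m"
  proof (intro divide_right_mono sum_mono)
    fix j
    have "(\<Sum>a<K. dl a (A ! j)) = (if A ! j < K then 1 else 0)"
      unfolding dl_def by (simp add: sum.delta)
    then show "(\<Sum>a<K. dl a (A ! j)) \<le> 1" by simp
  qed simp
  also have "\<dots> = 1" using m2 by simp
  finally show ?thesis .
qed

lemma sum_Sa: "(\<Sum>a<K. Sa a h) \<le> real (length h)"
proof (induction h)
  case Nil then show ?case by (simp add: Sa_def)
next
  case (Cons x h)
  have "(\<Sum>a<K. Sa a (x # h)) = (\<Sum>a<K. min 1 (cnt a (fst x) / real m)) + (\<Sum>a<K. Sa a h)"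
    unfolding Sa_def by (simp add: sum.distrib)
  then show ?case using Cons sum_min_le[of "fst x"] by simp
qed

definition qa :: "real \<Rightarrow> nat \<Rightarrow> history \<Rightarrow> action \<Rightarrow> nat \<Rightarrow> real" where
  "qa \<epsilon> a h A i = win_prob m (Pa \<epsilon> a) A i"

definition qst :: "real \<Rightarrow> nat \<Rightarrow> real \<Rightarrow> history \<Rightarrow> action \<Rightarrow> nat \<Rightarrow> real" where
  "qst \<epsilon> a \<tau> h A i = (if \<tau> \<le> Sa a h then 1 / real m else win_prob m (Pa \<epsilon> a) A i)"

lemma stoch_qa: "0 \<le> \<epsilon> \<Longrightarrow> \<epsilon> \<le> 1/16 \<Longrightarrow> stoch (qa \<epsilon> a)"
  unfolding stoch_def nonneg_def qa_def using wp_nonneg wp_sum by auto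

lemma stoch_qst: assumes "0 \<le> \<epsilon>" "\<epsilon> \<le> 1/16" shows "stoch (qst \<epsilon> a \<tau>)"
proof -
  have "(\<Sum>i<m. qst \<epsilon> a \<tau> h A i) = 1" for h A
    by (cases "\<tau> \<le> Sa a h") (use wp_sum m2 in \<open>auto simp: qst_def\<close>)
  moreover have "0 \<le> qst \<epsilon> a \<tau> h A i" if "i < m" for h A i
    by (cases "\<tau> \<le> Sa a h") (use wp_nonneg assms that in \<open>auto simp: qst_def\<close>)
  ultimately show ?thesis unfolding stoch_def nonneg_def by auto
qed

lemma Mv_bound:
  "Mv (qst \<epsilon> a \<tau>) n h \<le> exp (16 * \<epsilon>^2 * max 0 (\<tau> + 1 - Sa a h))"
proof (induction n arbitrary: h)
  case 0 then show ?case by simp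
next
  case (Suc n)
  define C where "C = 16 * \<epsilon>^2"
  have C0: "0 \<le> C" unfolding C_def by simp
  have mp: "0 < real m" using m2 by simp
  have per: "(\<Sum>i<m. (real m * (qst \<epsilon> a \<tau> h A i)^2) * Mv (qst \<epsilon> a \<tau>) n (h @ [(A,i)]))
        \<le> exp (C * max 0 (\<tau> + 1 - Sa a h))" if A: "A \<in> Acts" for A
  proof -
    define E where "E = exp (C * max 0 (\<tau> + 1 - (Sa a h + cnt a A / real m)))"
    have "(\<Sum>i<m. (real m * (qst \<epsilon> a \<tau> h A i)^2) * Mv (qst \<epsilon> a \<tau>) n (h @ [(A,i)]))
        \<le> (\<Sum>i<m. (real m * (qst \<epsilon> a \<tau> h A i)^2) * E)"
    proof (intro sum_mono mult_left_mono)
      fix i assume "i \<in> {..<m}"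
      show "Mv (qst \<epsilon> a \<tau>) n (h @ [(A,i)]) \<le> E"
        using Suc.IH[of "h @ [(A,i)]"] unfolding E_def C_def Sa_snoc min_Acts[OF A] .
    qed simp
    also have "\<dots> = (\<Sum>i<m. real m * (qst \<epsilon> a \<tau> h A i)^2) * E"
      by (simp add: sum_distrib_right)
    also have "\<dots> \<le> exp (C * max 0 (\<tau> + 1 - Sa a h))"
    proof (cases "\<tau> \<le> Sa a h")
      case True
      have s1: "(\<Sum>i<m. real m * (qst \<epsilon> a \<tau> h A i)^2) = 1"
        using True mp by (simp add: qst_def power2_eq_square)
      have "E \<le> exp (C * max 0 (\<tau> + 1 - Sa a h))"
      proof -
        have "0 \<le> cnt a A / real m" using cnt_nonneg[of a A] mp by simp
        then show ?thesis
          unfolding E_def using C0 by (auto intro!: mult_left_mono simp: max_def)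
      qed
      then show ?thesis using s1 by simp
    next
      case False
      have s1: "(\<Sum>i<m. real m * (qst \<epsilon> a \<tau> h A i)^2) \<le> exp (C * (cnt a A / real m))"
      proof -
        have "(\<Sum>i<m. real m * (qst \<epsilon> a \<tau> h A i)^2) \<le> 1 + C * (cnt a A / real m)"
          using False chi[of \<epsilon> a A] by (simp add: qst_def C_def)
        also have "\<dots> \<le> exp (C * (cnt a A / real m))" by (rule exp_ge_add_one_self)
        finally show ?thesis .
      qed
      have cm: "cnt a A / real m \<le> 1" using cnt_le[of a A] mp by simp
      have eE: "E = exp (C * (\<tau> + 1 - Sa a h - cnt a A / real m))"
        unfolding E_def using False cm by (simp add: max_def)
      have "(\<Sum>i<m. real m * (qst \<epsilon> a \<tau> h A i)^2) * E \<le> exp (C * (cnt a A / real m)) * E"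
        using s1 by (intro mult_right_mono) (auto simp: E_def)
      also have "\<dots> = exp (C * (\<tau> + 1 - Sa a h))"
        unfolding eE by (simp add: mult_exp_exp algebra_simps)
      also have "\<dots> = exp (C * max 0 (\<tau> + 1 - Sa a h))"
        using False by (simp add: max_def)
      finally show ?thesis .
    qed
    finally show ?thesis .
  qed
  have "Mv (qst \<epsilon> a \<tau>) (Suc n) h \<le> (\<Sum>A\<in>Acts. pmf (alg h) A * exp (C * max 0 (\<tau> + 1 - Sa a h)))"
    unfolding Mv.simps by (intro sum_mono mult_left_mono) (use per in auto)
  also have "\<dots> = exp (C * max 0 (\<tau> + 1 - Sa a h))"
    by (simp add: sum1 flip: sum_distrib_right)
  finally show ?case unfolding C_def .
qed

lemma inst_formula: "inst_regret m (Pa \<epsilon> a) a A = \<epsilon> * (1 - cnt a A / real m)"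
proof -
  have "(\<Sum>j<m. Pa \<epsilon> a a (A ! j) - 1/2) = \<epsilon> * (real m - cnt a A)"
    unfolding Pa_def cnt_def by (simp add: dl_def sum_subtractf sum_distrib_left algebra_simps)
  then show ?thesis unfolding inst_regret_def using m2 by (simp add: field_simps)
qed

lemma link:
  assumes e: "0 \<le> \<epsilon>" "\<epsilon> \<le> 1/16"
  shows "exp_regret_from m alg (\<lambda>_. Pa \<epsilon> a) a t n h =
     Ev (qa \<epsilon> a) (\<lambda>h. \<epsilon> * (real (length h) - Sa a h)) n h - \<epsilon> * (real (length h) - Sa a h)"
proof (induction n arbitrary: t h)
  case 0 then show ?case by simp
next
  case (Suc n)
  define R where "R h = \<epsilon> * (real (length h) - Sa a h)" for h
  have per: "inst_regret m (Pa \<epsilon> a) a A + (\<Sum>i<m. win_prob m (Pa \<epsilon> a) A i * exp_regret_from m alg (\<lambda>_. Pa \<epsilon> a) a (Suc t) n (h @ [(A, i)]))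
     = (\<Sum>i<m. qa \<epsilon> a h A i * Ev (qa \<epsilon> a) R n (h @ [(A, i)])) - R h" if A: "A \<in> Acts" for A
  proof -
    have Rs: "R (h @ [(A,i)]) = R h + inst_regret m (Pa \<epsilon> a) a A" for i
      unfolding R_def inst_formula Sa_snoc min_Acts[OF A] by (simp add: algebra_simps)
    have "(\<Sum>i<m. win_prob m (Pa \<epsilon> a) A i * exp_regret_from m alg (\<lambda>_. Pa \<epsilon> a) a (Suc t) n (h @ [(A, i)]))
       = (\<Sum>i<m. qa \<epsilon> a h A i * Ev (qa \<epsilon> a) R n (h @ [(A, i)]) - (R h + inst_regret m (Pa \<epsilon> a) a A) * win_prob m (Pa \<epsilon> a) A i)"
      unfolding Suc.IH R_def[symmetric] Rs by (simp add: qa_def algebra_simps)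
    also have "\<dots> = (\<Sum>i<m. qa \<epsilon> a h A i * Ev (qa \<epsilon> a) R n (h @ [(A, i)])) - (R h + inst_regret m (Pa \<epsilon> a) a A)"
      by (simp add: sum_subtractf wp_sum flip: sum_distrib_left)
    finally show ?thesis by simp
  qed
  have "exp_regret_from m alg (\<lambda>_. Pa \<epsilon> a) a t (Suc n) h
      = (\<Sum>A\<in>Acts. pmf (alg h) A * ((\<Sum>i<m. qa \<epsilon> a h A i * Ev (qa \<epsilon> a) R n (h @ [(A, i)])) - R h))"
    unfolding exp_regret_from.simps expect_eq by (intro sum.cong) (auto simp: per)
  also have "\<dots> = Ev (qa \<epsilon> a) R (Suc n) h - R h"
    by (simp add: right_diff_distrib sum_subtractf sum1 flip: sum_distrib_right)
  finally show ?case unfolding R_def .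
qed

lemma Ev_scale: "Ev q (\<lambda>h. c * g h) n h = c * Ev q g n h"
  using Ev_lin[of q c g 0 g n h] by simp

lemma pref_Pa: "0 \<le> \<epsilon> \<Longrightarrow> \<epsilon> \<le> 1/16 \<Longrightarrow> pref_matrix K (Pa \<epsilon> a)"
  unfolding pref_matrix_def Pa_def dl_def by auto

lemma main_bound:
  assumes K4: "4 \<le> K" and KT: "K \<le> T"
  shows "\<exists>Ps a. a < K \<and> (\<forall>t\<in>{1..T}. pref_matrix K (Ps t)) \<and> (\<forall>t\<in>{1..T}. \<forall>i<K. Ps t a i \<ge> 1/2) \<and>
          expected_regret m T alg Ps a \<ge> (1/192) * sqrt (real K * real T)"
proof -
  have Tp: "0 < real T" and Kp: "0 < real K" using K4 KT by auto
  have KTr: "real K \<le> real T" using KT by simp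
  define \<epsilon> where "\<epsilon> = sqrt (real K / real T) / 16"
  define \<tau> where "\<tau> = 2 * real T / real K"
  have KT1: "real K / real T \<le> 1" using KTr Tp by simp
  have e0: "0 \<le> \<epsilon>" unfolding \<epsilon>_def by simp
  have e1: "\<epsilon> \<le> 1/16" unfolding \<epsilon>_def using KT1 by simp
  have tp: "0 < \<tau>" unfolding \<tau>_def using Tp Kp by simp
  have tT: "\<tau> \<le> real T / 2" unfolding \<tau>_def using Tp K4 by (simp add: field_simps)
  define \<mu> where "\<mu> a = Ev q0 (Sa a) T []" for a
  have "(\<Sum>a<K. \<mu> a) = Ev q0 (\<lambda>h. \<Sum>a<K. Sa a h) T []"
    unfolding \<mu>_def by (simp add: Ev_sum)
  also have "\<dots> \<le> Ev q0 (\<lambda>h. real (length h)) T []"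
    by (rule Ev_mono[OF nonneg_q0]) (rule sum_Sa)
  also have "\<dots> = real T" by (simp add: Ev_len[OF stoch_q0])
  finally have sumu: "(\<Sum>a<K. \<mu> a) \<le> real T" .
  have "\<exists>a<K. \<mu> a \<le> real T / real K"
  proof (rule ccontr)
    assume "\<not> ?thesis"
    then have "\<forall>a\<in>{..<K}. real T / real K < \<mu> a" by auto
    then have "(\<Sum>a<K. real T / real K) < (\<Sum>a<K. \<mu> a)"
      using K4 by (intro sum_strict_mono) (auto simp: lessThan_empty_iff)
    then show False using sumu Kp by simp
  qed
  then obtain a where aK: "a < K" and mua: "\<mu> a \<le> real T / real K" by blast
  define ind where "ind h = (if \<tau> \<le> Sa a h then 1 else 0 :: real)" for h
  define X where "X = Ev (qa \<epsilon> a) (Sa a) T []"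
  have sqa: "stoch (qa \<epsilon> a)" by (rule stoch_qa[OF e0 e1])
  have sqst: "stoch (qst \<epsilon> a \<tau>)" by (rule stoch_qst[OF e0 e1])
  have nqst: "nonneg (qst \<epsilon> a \<tau>)" using sqst unfolding stoch_def by simp
  have reg: "expected_regret m T alg (\<lambda>_. Pa \<epsilon> a) a = \<epsilon> * (real T - X)"
  proof -
    have "expected_regret m T alg (\<lambda>_. Pa \<epsilon> a) a = Ev (qa \<epsilon> a) (\<lambda>h. \<epsilon> * (real (length h) - Sa a h)) T []"
      unfolding expected_regret_def link[OF e0 e1] by (simp add: Sa_Nil)
    also have "\<dots> = Ev (qa \<epsilon> a) (\<lambda>h. \<epsilon> * real (length h) + (- \<epsilon>) * Sa a h) T []"
      by (simp add: algebra_simps)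
    also have "\<dots> = \<epsilon> * real T - \<epsilon> * X"
      unfolding Ev_lin X_def by (simp add: Ev_len[OF sqa])
    finally show ?thesis by (simp add: algebra_simps)
  qed
  have "X \<le> Ev (qst \<epsilon> a \<tau>) (\<lambda>h. if \<tau> \<le> Sa a h then real (length h) else Sa a h) T []"
    unfolding X_def
    by (rule compare[OF sqa sqst]) (auto simp: qst_def qa_def Sa_le_len intro: order_trans[OF _ Sa_mono])
  also have "\<dots> \<le> Ev (qst \<epsilon> a \<tau>) (\<lambda>h. (real (length h) - \<tau>) * ind h + \<tau>) T []"
    by (rule Ev_mono[OF nqst]) (auto simp: ind_def)
  also have "\<dots> = Ev (qst \<epsilon> a \<tau>) (\<lambda>h. (real T - \<tau>) * ind h + \<tau>) T []"
    by (rule Ev_cong_len) simp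
  also have "\<dots> = (real T - \<tau>) * Ev (qst \<epsilon> a \<tau>) ind T [] + \<tau>"
    by (simp add: Ev_const_add[OF sqst] Ev_scale)
  finally have X1: "X \<le> (real T - \<tau>) * Ev (qst \<epsilon> a \<tau>) ind T [] + \<tau>" .
  have W: "Ev q0 (\<lambda>h. (ind h)^2) T [] \<le> 1/2"
  proof -
    have "Ev q0 (\<lambda>h. (ind h)^2) T [] \<le> Ev q0 (\<lambda>h. (1/\<tau>) * Sa a h) T []"
      by (rule Ev_mono[OF nonneg_q0]) (use tp Sa_nonneg in \<open>auto simp: ind_def field_simps\<close>)
    also have "\<dots> = \<mu> a / \<tau>" unfolding Ev_scale \<mu>_def by simp
    also have "\<dots> \<le> (real T / real K) / \<tau>" using divide_right_mono[OF mua, of \<tau>] tp by simp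
    also have "\<dots> = 1/2" unfolding \<tau>_def using Tp Kp by simp
    finally show ?thesis .
  qed
  have M: "Mv (qst \<epsilon> a \<tau>) T [] \<le> 11/8"
  proof -
    have ee: "\<epsilon>^2 = real K / real T / 256"
      unfolding \<epsilon>_def using Tp Kp by (simp add: power_divide)
    have x: "16 * \<epsilon>^2 * (\<tau> + 1) \<le> 3/16"
    proof -
      have "16 * \<epsilon>^2 * (\<tau> + 1) = (2 + real K / real T) / 16"
        unfolding ee \<tau>_def using Tp Kp by (simp add: field_simps)
      then show ?thesis using KT1 by simp
    qed
    have x0: "0 \<le> 16 * \<epsilon>^2 * (\<tau> + 1)" using tp by simp
    have "Mv (qst \<epsilon> a \<tau>) T [] \<le> exp (16 * \<epsilon>^2 * max 0 (\<tau> + 1 - Sa a []))" by (rule Mv_bound)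
    also have "\<dots> = exp (16 * \<epsilon>^2 * (\<tau> + 1))" using tp by (simp add: Sa_Nil)
    also have "\<dots> \<le> 1 + 2 * (16 * \<epsilon>^2 * (\<tau> + 1))"
      using exp_bound_lemma[of "16 * \<epsilon>^2 * (\<tau> + 1)"] x x0 by simp
    also have "\<dots> \<le> 11/8" using x by simp
    finally show ?thesis .
  qed
  have I: "Ev (qst \<epsilon> a \<tau>) ind T [] \<le> 5/6"
  proof -
    have "Ev (qst \<epsilon> a \<tau>) ind T [] \<le> ((3/2) * Ev q0 (\<lambda>h. (ind h)^2) T [] + Mv (qst \<epsilon> a \<tau>) T [] / (3/2)) / 2"
      by (rule amgm[OF nqst]) (auto simp: ind_def)
    also have "\<dots> \<le> ((3/2) * (1/2) + (11/8) / (3/2)) / 2"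
      using W M by (intro divide_right_mono add_mono mult_left_mono) auto
    also have "\<dots> = 5/6" by simp
    finally show ?thesis .
  qed
  have "X \<le> (real T - \<tau>) * (5/6) + \<tau>"
  proof -
    have "(real T - \<tau>) * Ev (qst \<epsilon> a \<tau>) ind T [] \<le> (real T - \<tau>) * (5/6)"
      using I tT tp by (intro mult_left_mono) auto
    then show ?thesis using X1 by linarith
  qed
  moreover have "(real T - \<tau>) * (5/6) = 5/6 * real T - 5/6 * \<tau>" by (simp add: left_diff_distrib)
  ultimately have "real T / 12 \<le> real T - X" using tT by linarith
  then have "\<epsilon> * (real T / 12) \<le> \<epsilon> * (real T - X)" using e0 by (rule mult_left_mono)
  moreover have "\<epsilon> * (real T / 12) = (1/192) * sqrt (real K * real T)"
  proof -
    have "sqrt (real K / real T) * real T = sqrt (real K * real T)"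
      using Tp by (simp add: real_sqrt_divide real_sqrt_mult field_simps)
    then show ?thesis unfolding \<epsilon>_def by (simp add: field_simps)
  qed
  ultimately have "expected_regret m T alg (\<lambda>_. Pa \<epsilon> a) a \<ge> (1/192) * sqrt (real K * real T)"
    using reg by simp
  moreover have "\<forall>t\<in>{1..T}. pref_matrix K (Pa \<epsilon> a)" using pref_Pa[OF e0 e1] by simp
  moreover have "\<forall>t\<in>{1..T}. \<forall>i<K. Pa \<epsilon> a a i \<ge> 1/2" using e0 by (auto simp: Pa_def dl_def)
  ultimately show ?thesis using aK by (intro exI[of _ "\<lambda>_. Pa \<epsilon> a"] exI[of _ a]) simp
qed

end

theorem theorem2:
  shows "\<exists>c::real. c > 0 \<and>
    (\<forall>(m::nat) (K::nat) (T::nat) (alg :: history \<Rightarrow> action pmf).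
       2 \<le> m \<longrightarrow> m \<le> K \<longrightarrow> 4 \<le> K \<longrightarrow> K \<le> T \<longrightarrow> valid_alg K m alg \<longrightarrow>
       (\<exists>(Ps :: nat \<Rightarrow> nat \<Rightarrow> nat \<Rightarrow> real) (a::nat).
          a < K \<and>
          (\<forall>t\<in>{1..T}. pref_matrix K (Ps t)) \<and>
          (\<forall>t\<in>{1..T}. \<forall>i<K. Ps t a i \<ge> 1/2) \<and>
          expected_regret m T alg Ps a \<ge> c * sqrt (real K * real T)))"
proof (intro exI[of _ "1/192"] conjI allI impI)
  fix m K T :: nat and alg :: "history \<Rightarrow> action pmf"
  assume "2 \<le> m" "m \<le> K" "4 \<le> K" "K \<le> T" "valid_alg K m alg"
  then interpret setting K m alg by unfold_locales
  show "\<exists>Ps a. a < K \<and> (\<forall>t\<in>{1..T}. pref_matrix K (Ps t)) \<and> (\<forall>t\<in>{1..T}. \<forall>i<K. 1 / 2 \<le> Ps t a i) \<and>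
          1 / 192 * sqrt (real K * real T) \<le> expected_regret m T alg Ps a"
    using main_bound \<open>4 \<le> K\<close> \<open>K \<le> T\<close> by blast
qed simp

end
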